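(* Let $V$ be a finite-dimensional irreducible $\mathcal U$-module. Then there exist nonzero scalars $\varepsilon_0,\varepsilon_1\in\mathbb K$, a nonnegative integer $d$, and a decomposition $U_0,\dots,U_d$ of $V$ such that $(k_0-\varepsilon_0q^{2i-d}I)U_i=0$ and $(k_1-\varepsilon_1q^{d-2i}I)U_i=0$ for $0\le i\le d$. The sequence $\varepsilon_0,\varepsilon_1;U_0,\dots,U_d$ is unique. Moreover, with $U_{-1}=U_{d+1}=0$, for $0\le i\le d$: $(\varepsilon_0y^+_0-q^{d-2i}I)U_i\subseteq U_{i+1}$, $(\varepsilon_1y^-_1-q^{2i-d}I)U_i\subseteq U_{i+1}$, $(\varepsilon_0y^-_0-q^{d-2i}I)U_i\subseteq U_{i-1}$, $(\varepsilon_1y^+_1-q^{2i-d}I)U_i\subseteq U_{i-1}$.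
   Context: $\mathbb K$ is an algebraically closed field, $q\in\mathbb K$ nonzero and not a root of unity, $[3]_q=\frac{q^3-q^{-3}}{q-q^{-1}}$. $\mathcal U$ (isomorphic to $U_q(\widehat{sl}_2)$) is the unital associative $\mathbb K$-algebra with generators $y^{\pm}_i,k_i^{\pm1}$ ($i\in\{0,1\}$) and relations: $k_ik_i^{-1}=k_i^{-1}k_i=1$; $k_0k_1$ central; $\frac{qy^+_ik_i-q^{-1}k_iy^+_i}{q-q^{-1}}=1$; $\frac{qk_iy^-_i-q^{-1}y^-_ik_i}{q-q^{-1}}=1$; $\frac{qy^-_iy^+_i-q^{-1}y^+_iy^-_i}{q-q^{-1}}=1$; $\frac{qy^+_iy^-_j-q^{-1}y^-_jy^+_i}{q-q^{-1}}=k_0^{-1}k_1^{-1}$ ($i\ne j$); $(y^{\pm}_i)^3y^{\pm}_j-[3]_q(y^{\pm}_i)^2y^{\pm}_jy^{\pm}_i+[3]_qy^{\pm}_iy^{\pm}_j(y^{\pm}_i)^2-y^{\pm}_j(y^{\pm}_i)^3=0$ ($i\ne j$). A decomposition of $V$ is a sequence $U_0,\dots,U_d$ of nonzero subspaces with $V=U_0+\cdots+U_d$ a direct sum. Irreducible modules are nonzero by convention. *)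

theory Defs
  imports Main "HOL-Computational_Algebra.Polynomial"
begin

definition alg_closed_field :: "'k::field itself \<Rightarrow> bool" where
  "alg_closed_field _ \<longleftrightarrow> (\<forall>p::'k poly. degree p \<ge> 1 \<longrightarrow> (\<exists>x. poly p x = 0))"

text \<open>A finite-dimensional K-vector space V, given as the whole type 'v with scalar multiplication scale.\<close>
definition fd_vector_space :: "('k::field \<Rightarrow> 'v::ab_group_add \<Rightarrow> 'v) \<Rightarrow> bool" where
  "fd_vector_space scale \<longleftrightarrow> vector_space scale \<and> (\<exists>B. finite B \<and> module.span scale B = UNIV)"

definition qint3 :: "'k::field \<Rightarrow> 'k" where
  "qint3 q = (q^3 - inverse q ^ 3) / (q - inverse q)"

definition serre :: "('k::field \<Rightarrow> 'v::ab_group_add \<Rightarrow> 'v) \<Rightarrow> 'k \<Rightarrow> ('v \<Rightarrow> 'v) \<Rightarrow> ('v \<Rightarrow> 'v) \<Rightarrow> bool" where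
  "serre scale q a b \<longleftrightarrow> (\<forall>v.
      a (a (a (b v))) - scale (qint3 q) (a (a (b (a v))))
    + scale (qint3 q) (a (b (a (a v)))) - b (a (a (a v))) = 0)"

definition qrel :: "('k::field \<Rightarrow> 'v::ab_group_add \<Rightarrow> 'v) \<Rightarrow> 'k \<Rightarrow> ('v \<Rightarrow> 'v) \<Rightarrow> ('v \<Rightarrow> 'v) \<Rightarrow> ('v \<Rightarrow> 'v) \<Rightarrow> bool" where
  "qrel scale q x z w \<longleftrightarrow> (\<forall>v.
      scale (inverse (q - inverse q)) (scale q (x (z v)) - scale (inverse q) (z (x v))) = w v)"

text \<open>A U-module structure on V: operators for the generators
  yp0 = y^+_0, yp1 = y^+_1, ym0 = y^-_0, ym1 = y^-_1, k0, k1, k0i = k_0^{-1}, k1i = k_1^{-1},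
  all linear, satisfying the defining relations of the algebra U.\<close>
definition U_module ::
  "('k::field \<Rightarrow> 'v::ab_group_add \<Rightarrow> 'v) \<Rightarrow> 'k \<Rightarrow>
   ('v \<Rightarrow> 'v) \<Rightarrow> ('v \<Rightarrow> 'v) \<Rightarrow> ('v \<Rightarrow> 'v) \<Rightarrow> ('v \<Rightarrow> 'v) \<Rightarrow>
   ('v \<Rightarrow> 'v) \<Rightarrow> ('v \<Rightarrow> 'v) \<Rightarrow> ('v \<Rightarrow> 'v) \<Rightarrow> ('v \<Rightarrow> 'v) \<Rightarrow> bool" where
  "U_module scale q yp0 yp1 ym0 ym1 k0 k1 k0i k1i \<longleftrightarrow>
     (\<forall>f \<in> {yp0, yp1, ym0, ym1, k0, k1, k0i, k1i}. Vector_Spaces.linear scale scale f) \<and>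
     k0 \<circ> k0i = id \<and> k0i \<circ> k0 = id \<and> k1 \<circ> k1i = id \<and> k1i \<circ> k1 = id \<and>
     (\<forall>g \<in> {yp0, yp1, ym0, ym1, k0, k1, k0i, k1i}. (k0 \<circ> k1) \<circ> g = g \<circ> (k0 \<circ> k1)) \<and>
     qrel scale q yp0 k0 id \<and> qrel scale q yp1 k1 id \<and>
     qrel scale q k0 ym0 id \<and> qrel scale q k1 ym1 id \<and>
     qrel scale q ym0 yp0 id \<and> qrel scale q ym1 yp1 id \<and>
     qrel scale q yp0 ym1 (k0i \<circ> k1i) \<and> qrel scale q yp1 ym0 (k0i \<circ> k1i) \<and>
     serre scale q yp0 yp1 \<and> serre scale q yp1 yp0 \<and>
     serre scale q ym0 ym1 \<and> serre scale q ym1 ym0"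

definition U_irreducible ::
  "('k::field \<Rightarrow> 'v::ab_group_add \<Rightarrow> 'v) \<Rightarrow>
   ('v \<Rightarrow> 'v) \<Rightarrow> ('v \<Rightarrow> 'v) \<Rightarrow> ('v \<Rightarrow> 'v) \<Rightarrow> ('v \<Rightarrow> 'v) \<Rightarrow>
   ('v \<Rightarrow> 'v) \<Rightarrow> ('v \<Rightarrow> 'v) \<Rightarrow> ('v \<Rightarrow> 'v) \<Rightarrow> ('v \<Rightarrow> 'v) \<Rightarrow> bool" where
  "U_irreducible scale yp0 yp1 ym0 ym1 k0 k1 k0i k1i \<longleftrightarrow>
     (UNIV :: 'v set) \<noteq> {0} \<and>
     (\<forall>W. module.subspace scale W \<and>
          (\<forall>g \<in> {yp0, yp1, ym0, ym1, k0, k1, k0i, k1i}. g ` W \<subseteq> W)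
          \<longrightarrow> W = {0} \<or> W = UNIV)"

definition decomposition :: "('k::field \<Rightarrow> 'v::ab_group_add \<Rightarrow> 'v) \<Rightarrow> nat \<Rightarrow> (nat \<Rightarrow> 'v set) \<Rightarrow> bool" where
  "decomposition scale d U \<longleftrightarrow>
     (\<forall>i\<le>d. module.subspace scale (U i) \<and> U i \<noteq> {0}) \<and>
     (\<forall>v. \<exists>!u::nat \<Rightarrow> 'v. (\<forall>i\<le>d. u i \<in> U i) \<and> (\<forall>i>d. u i = 0) \<and> v = (\<Sum>i\<le>d. u i))"

definition weight_decomp ::
  "('k::field \<Rightarrow> 'v::ab_group_add \<Rightarrow> 'v) \<Rightarrow> 'k \<Rightarrow> ('v \<Rightarrow> 'v) \<Rightarrow> ('v \<Rightarrow> 'v) \<Rightarrow>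
   'k \<Rightarrow> 'k \<Rightarrow> nat \<Rightarrow> (nat \<Rightarrow> 'v set) \<Rightarrow> bool" where
  "weight_decomp scale q k0 k1 e0 e1 d U \<longleftrightarrow>
     e0 \<noteq> 0 \<and> e1 \<noteq> 0 \<and> decomposition scale d U \<and>
     (\<forall>i\<le>d. \<forall>u\<in>U i.
        k0 u = scale (e0 * q powi (2 * int i - int d)) u \<and>
        k1 u = scale (e1 * q powi (int d - 2 * int i)) u)"

end

theory Submission
  imports Defs
begin


locale fdvs = vector_space scale for scale :: "'k::field \<Rightarrow> 'v::ab_group_add \<Rightarrow> 'v" (infixr "*s" 75) +
  fixes B :: "'v set"
  assumes finB: "finite B" and spanB: "span B = UNIV"
begin

abbreviation lin :: "('v \<Rightarrow> 'v) \<Rightarrow> bool" where "lin T \<equiv> Vector_Spaces.linear scale scale T"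

lemma lin_add: "lin T \<Longrightarrow> T (x + y) = T x + T y" by (simp add: Vector_Spaces.linear_iff)
lemma lin_scale: "lin T \<Longrightarrow> T (c *s x) = c *s T x" by (simp add: Vector_Spaces.linear_iff)
lemma lin_0: "lin T \<Longrightarrow> T 0 = 0" using lin_scale[of T 0 0] by simp
lemma lin_neg: "lin T \<Longrightarrow> T (- x) = - T x" using lin_scale[of T "-1" x] by simp
lemma lin_diff: "lin T \<Longrightarrow> T (x - y) = T x - T y" using lin_add[of T x "-y"] lin_neg[of T y] by simp
lemma lin_sum: "lin T \<Longrightarrow> T (sum f A) = (\<Sum>a\<in>A. T (f a))"
  by (induct A rule: infinite_finite_induct) (simp_all add: lin_0 lin_add)

lemma dep: "\<exists>c. (\<exists>i\<le>card B. c i \<noteq> 0) \<and> (\<Sum>i\<le>card B. c i *s f i) = 0"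
proof (cases "inj_on f {..card B}")
  case True
  let ?N = "card B"
  have "\<not> independent (f ` {..?N})"
  proof
    assume "independent (f ` {..?N})"
    then have "card (f ` {..?N}) \<le> card B" using independent_span_bound[OF finB] spanB by auto
    then show False using True by (simp add: card_image)
  qed
  then obtain t u v where t: "finite t" "t \<subseteq> f ` {..?N}" "(\<Sum>v\<in>t. u v *s v) = 0" "v \<in> t" "u v \<noteq> 0"
    unfolding dependent_explicit by blast
  define c where "c i = (if f i \<in> t then u (f i) else 0)" for i
  define J where "J = {i\<in>{..?N}. f i \<in> t}"
  have tJ: "t = f ` J" using t(2) unfolding J_def by auto
  have injJ: "inj_on f J" using True unfolding J_def by (auto intro: inj_on_subset)
  have "(\<Sum>i\<in>J. c i *s f i) = (\<Sum>i\<le>?N. c i *s f i)"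
    by (rule sum.mono_neutral_left) (auto simp: J_def c_def)
  then have "(\<Sum>i\<le>?N. c i *s f i) = (\<Sum>i\<in>J. c i *s f i)" by simp
  also have "\<dots> = (\<Sum>i\<in>J. u (f i) *s f i)" by (rule sum.cong) (auto simp: J_def c_def)
  also have "\<dots> = (\<Sum>v\<in>t. u v *s v)" unfolding tJ by (rule sum.reindex[OF injJ, symmetric, unfolded comp_def])
  finally have s0: "(\<Sum>i\<le>?N. c i *s f i) = 0" using t(3) by simp
  obtain i where "i \<in> J" "f i = v" using t(4) tJ by auto
  then have "i \<le> ?N" "c i \<noteq> 0" using t(5) by (auto simp: J_def c_def)
  then show ?thesis using s0 by blast
next
  case False
  then obtain i j where ij: "i \<le> card B" "j \<le> card B" "i \<noteq> j" "f i = f j"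
    unfolding inj_on_def by auto
  define c where "c k = (if k = i then 1 else if k = j then -1 else (0::'k))" for k
  have "(\<Sum>k\<in>{i,j}. c k *s f k) = (\<Sum>k\<le>card B. c k *s f k)"
    by (rule sum.mono_neutral_left) (use ij in \<open>auto simp: c_def\<close>)
  moreover have "(\<Sum>k\<in>{i,j}. c k *s f k) = 0" using ij by (simp add: c_def)
  ultimately show ?thesis using ij by (intro exI[of _ c]) (auto simp: c_def)
qed

definition peval :: "('v \<Rightarrow> 'v) \<Rightarrow> 'k poly \<Rightarrow> 'v \<Rightarrow> 'v" where
  "peval T p v = (\<Sum>i\<le>degree p. coeff p i *s (T^^i) v)"

lemma peval_bound: "degree p \<le> M \<Longrightarrow> peval T p v = (\<Sum>i\<le>M. coeff p i *s (T^^i) v)"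
  unfolding peval_def by (rule sum.mono_neutral_left) (auto simp: coeff_eq_0)

lemma peval_factor:
  assumes T: "lin T"
  shows "peval T ([:-r,1:] * g) v = T (peval T g v) - r *s peval T g v"
proof -
  let ?M = "Suc (degree g)"
  have e: "[:-r,1:] * g = pCons 0 g - smult r g" by simp
  have dg: "degree ([:-r,1:] * g) \<le> ?M"
    using degree_mult_le[of "[:-r,1:]" g] by simp
  have "peval T ([:-r,1:] * g) v = (\<Sum>i\<le>?M. coeff (pCons 0 g - smult r g) i *s (T^^i) v)"
    using peval_bound[OF dg] e by simp
  also have "\<dots> = (\<Sum>i\<le>?M. coeff (pCons 0 g) i *s (T^^i) v) - (\<Sum>i\<le>?M. coeff (smult r g) i *s (T^^i) v)"
    by (simp add: scale_left_diff_distrib sum_subtractf)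
  also have "(\<Sum>i\<le>?M. coeff (smult r g) i *s (T^^i) v) = r *s peval T g v"
    by (simp add: peval_bound[of g ?M] scale_sum_right coeff_eq_0)
  also have "(\<Sum>i\<le>?M. coeff (pCons 0 g) i *s (T^^i) v) = (\<Sum>i\<le>degree g. coeff g i *s T ((T^^i) v))"
    by (subst sum.atMost_Suc_shift) simp
  also have "\<dots> = T (peval T g v)"
    unfolding peval_def by (simp add: lin_sum[OF T] lin_scale[OF T])
  finally show ?thesis .
qed


lemma eig_poly:
  assumes acf: "alg_closed_field TYPE('k)" and T: "lin T"
  shows "p \<noteq> 0 \<Longrightarrow> v \<noteq> 0 \<Longrightarrow> peval T p v = 0 \<Longrightarrow> \<exists>r w. w \<noteq> 0 \<and> T w = r *s w"
proof (induction "degree p" arbitrary: p v rule: less_induct)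
  case less
  show ?case
  proof (cases "degree p = 0")
    case True
    then have "peval T p v = coeff p 0 *s v" unfolding peval_def by simp
    moreover have "coeff p 0 \<noteq> 0" using less.prems(1) True leading_coeff_0_iff[of p] by simp
    ultimately show ?thesis using less.prems by simp
  next
    case False
    then obtain r where "poly p r = 0" using acf False unfolding alg_closed_field_def by (metis One_nat_def Suc_leI neq0_conv)
    then obtain g where pg: "p = [:-r,1:] * g" using poly_eq_0_iff_dvd by (metis dvdE)
    have g0: "g \<noteq> 0" using pg less.prems(1) by auto
    have dg: "degree g < degree p" using pg g0 degree_mult_eq[of "[:-r,1:]" g] by (simp del: mult_pCons_left)
    show ?thesis
    proof (cases "peval T g v = 0")
      case True
      then show ?thesis using less.hyps[OF dg g0 less.prems(2)] by blast
    next
      case False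
      have "T (peval T g v) - r *s peval T g v = 0" using less.prems(3) peval_factor[OF T] pg by simp
      then have "T (peval T g v) = r *s peval T g v" by simp
      then show ?thesis using False by blast
    qed
  qed
qed

lemma eig_exists:
  assumes acf: "alg_closed_field TYPE('k)" and T: "lin T" and nz: "(UNIV::'v set) \<noteq> {0}"
  shows "\<exists>r w. w \<noteq> 0 \<and> T w = r *s w"
proof -
  obtain v :: 'v where v: "v \<noteq> 0" using nz by auto
  obtain c where c: "\<exists>i\<le>card B. c i \<noteq> 0" "(\<Sum>i\<le>card B. c i *s (T^^i) v) = 0"
    using dep[of "\<lambda>i. (T^^i) v"] by blast
  define p where "p = (\<Sum>i\<le>card B. monom (c i) i)"
  have cp: "coeff p i = (if i \<le> card B then c i else 0)" for i
    unfolding p_def coeff_sum by (simp add: sum.delta')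
  have p0: "p \<noteq> 0" using c(1) cp by (metis coeff_0)
  have dp: "degree p \<le> card B" by (rule degree_le) (simp add: cp)
  have "peval T p v = 0" using c(2) by (simp add: peval_bound[OF dp] cp)
  then show ?thesis using eig_poly[OF acf T p0 v] by blast
qed

lemma eig_indep:
  assumes T: "lin T"
  shows "finite I \<Longrightarrow> inj_on \<mu> I \<Longrightarrow> (\<forall>i\<in>I. T (u i) = \<mu> i *s u i) \<Longrightarrow> (\<Sum>i\<in>I. u i) = 0 \<Longrightarrow> \<forall>i\<in>I. u i = 0"
proof (induction I arbitrary: u rule: finite_induct)
  case empty
  then show ?case by simp
next
  case (insert a F)
  define u' where "u' i = (\<mu> i - \<mu> a) *s u i" for i
  have su: "(\<Sum>i\<in>F. u i) = - u a" using insert.prems(3) insert.hyps by (simp add: add_eq_0_iff)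
  have "(\<Sum>i\<in>F. u' i) = (\<Sum>i\<in>F. T (u i)) - \<mu> a *s (\<Sum>i\<in>F. u i)"
    using insert.prems(2) by (simp add: u'_def scale_left_diff_distrib sum_subtractf scale_sum_right)
  also have "\<dots> = T (- u a) - \<mu> a *s (- u a)" by (simp add: lin_sum[OF T, symmetric] su)
  also have "\<dots> = 0" using insert.prems(2) by (simp add: lin_neg[OF T])
  finally have "(\<Sum>i\<in>F. u' i) = 0" .
  moreover have "\<forall>i\<in>F. T (u' i) = \<mu> i *s u' i"
    using insert.prems(2) by (simp add: u'_def lin_scale[OF T] scale_left_commute)
  moreover have "inj_on \<mu> F" using insert.prems(1) by (auto intro: inj_on_subset)
  ultimately have "\<forall>i\<in>F. u' i = 0" using insert.IH by blast
  moreover have "\<forall>i\<in>F. \<mu> i \<noteq> \<mu> a" using insert.prems(1) insert.hyps by (auto simp: inj_on_def)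
  ultimately have F0: "\<forall>i\<in>F. u i = 0" by (simp add: u'_def)
  then have "u a = 0" using su by simp
  then show ?case using F0 by simp
qed

lemma no_long_string:
  assumes T: "lin T" and inj: "inj_on \<mu> {..card B}"
    and ex: "\<forall>i\<le>card B. \<exists>w. w \<noteq> 0 \<and> T w = \<mu> i *s w"
  shows False
proof -
  define f where "f i = (SOME w. w \<noteq> 0 \<and> T w = \<mu> i *s w)" for i
  have f: "f i \<noteq> 0 \<and> T (f i) = \<mu> i *s f i" if "i \<le> card B" for i
    using someI_ex[OF ex[rule_format, OF that]] unfolding f_def .
  obtain c where c: "\<exists>i\<le>card B. c i \<noteq> 0" "(\<Sum>i\<le>card B. c i *s f i) = 0"
    using dep[of f] by blast
  have "\<forall>i\<in>{..card B}. c i *s f i = 0"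
    by (rule eig_indep[OF T _ inj]) (use c f in \<open>auto simp: lin_scale[OF T] scale_left_commute\<close>)
  then show False using c(1) f by auto
qed
end


definition lamf :: "'k::field \<Rightarrow> 'k \<Rightarrow> nat \<Rightarrow> nat \<Rightarrow> 'k" where
  "lamf q e0 d i = e0 * q powi (2 * int i - int d)"

locale umod = fdvs scale B for scale :: "'k::field \<Rightarrow> 'v::ab_group_add \<Rightarrow> 'v" (infixr "*s" 75) and B +
  fixes q :: 'k and yp0 yp1 ym0 ym1 k0 k1 k0i k1i :: "'v \<Rightarrow> 'v"
  assumes acf: "alg_closed_field TYPE('k)"
    and q0: "q \<noteq> 0" and qn: "\<forall>n::nat. n > 0 \<longrightarrow> q ^ n \<noteq> 1"
    and Umod: "U_module scale q yp0 yp1 ym0 ym1 k0 k1 k0i k1i"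
    and Uirr: "U_irreducible scale yp0 yp1 ym0 ym1 k0 k1 k0i k1i"
begin

lemma lins: "lin yp0" "lin yp1" "lin ym0" "lin ym1" "lin k0" "lin k1" "lin k0i" "lin k1i"
  using Umod unfolding U_module_def by auto

lemma kinv: "k0 (k0i v) = v" "k0i (k0 v) = v" "k1 (k1i v) = v" "k1i (k1 v) = v"
  using Umod unfolding U_module_def by (auto simp: fun_eq_iff)

lemma cent: assumes "g \<in> {yp0, yp1, ym0, ym1, k0, k1, k0i, k1i}" shows "k0 (k1 (g v)) = g (k0 (k1 v))"
proof -
  have "(k0 \<circ> k1) \<circ> g = g \<circ> (k0 \<circ> k1)"
    using Umod assms unfolding U_module_def by blast
  then show ?thesis by (metis comp_apply)
qed

lemma qrels: "qrel scale q yp0 k0 id" "qrel scale q yp1 k1 id" "qrel scale q k0 ym0 id" "qrel scale q k1 ym1 id"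
  using Umod unfolding U_module_def by auto

lemma irr: "subspace W \<Longrightarrow> (\<forall>g\<in>{yp0, yp1, ym0, ym1, k0, k1, k0i, k1i}. g ` W \<subseteq> W) \<Longrightarrow> W = {0} \<or> W = UNIV"
  using Uirr unfolding U_irreducible_def by auto

lemma nz: "(UNIV::'v set) \<noteq> {0}"
  using Uirr unfolding U_irreducible_def by auto

lemma q2: "q^2 \<noteq> 1" using qn by auto

lemma qa: "q - inverse q \<noteq> 0"
proof
  assume "q - inverse q = 0"
  then have "q * q = 1" using q0 by (simp add: field_simps)
  then show False using q2 by (simp add: power2_eq_square)
qed

lemma powi_one: "q powi n = 1 \<Longrightarrow> n = 0"
proof (cases "n \<ge> 0")
  case True
  assume "q powi n = 1"
  then have "q ^ nat n = 1" using True by (simp add: power_int_nonneg_exp)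
  show "n = 0"
  proof (rule ccontr)
    assume "n \<noteq> 0"
    then have "nat n > 0" using True by simp
    then show False using qn \<open>q ^ nat n = 1\<close> by blast
  qed
next
  case False
  assume "q powi n = 1"
  then have "q powi (-n) = 1" by (simp add: power_int_minus)
  then have "q ^ nat (-n) = 1" using False by (simp add: power_int_nonneg_exp)
  moreover have "nat (-n) > 0" using False by simp
  ultimately show "n = 0" using qn by blast
qed

lemma powi_inj: "q powi a = q powi b \<Longrightarrow> a = b"
proof -
  assume "q powi a = q powi b"
  then have "q powi (a - b) = 1" using q0 by (simp add: power_int_diff)
  then have "a - b = 0" by (rule powi_one)
  then show "a = b" by simp
qed

lemma powi_add: "q powi a * q powi b = q powi (a + b)"
  using q0 by (simp add: power_int_add)

lemma lamf_up: "lamf q e0 d i * q^2 = lamf q e0 d (Suc i)"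
proof -
  have "q powi (2 * int i - int d) * q powi 2 = q powi (2 * int i - int d + 2)"
    by (rule powi_add)
  also have "2 * int i - int d + 2 = 2 * int (Suc i) - int d" by simp
  finally have "q powi (2 * int i - int d) * q^2 = q powi (2 * int (Suc i) - int d)" by simp
  then show ?thesis unfolding lamf_def by (simp add: mult.assoc)
qed

lemma lamf_down: "lamf q e0 d (Suc i) / q^2 = lamf q e0 d i"
  using lamf_up[of e0 d i, symmetric] q0 by simp

lemma lamf_nz: "e0 \<noteq> 0 \<Longrightarrow> lamf q e0 d i \<noteq> 0"
  using q0 by (simp add: lamf_def)

lemma lamf_inj: "e0 \<noteq> 0 \<Longrightarrow> inj_on (lamf q e0 d) A"
  unfolding inj_on_def lamf_def by (auto dest!: powi_inj)

lemma diff_swap: "(a::'v) - x = c \<Longrightarrow> x = a - c" by (simp add: algebra_simps)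

lemma qrel_up:
  assumes qr: "qrel scale q y k id" and y: "lin y" and k: "lin k" and kv: "k v = l *s v" and l0: "l \<noteq> 0"
  shows "k (y v - inverse l *s v) = (l * q^2) *s (y v - inverse l *s v)"
proof -
  have h: "inverse (q - inverse q) *s (q *s y (k v) - inverse q *s k (y v)) = v"
    using qr unfolding qrel_def by simp
  have h2: "q *s y (k v) - inverse q *s k (y v) = (q - inverse q) *s v"
    using arg_cong[OF h, of "\<lambda>x. (q - inverse q) *s x"] qa by simp
  have yk: "y (k v) = l *s y v" by (simp add: kv lin_scale[OF y])
  have h3: "inverse q *s k (y v) = (q * l) *s y v - (q - inverse q) *s v"
    by (rule diff_swap) (use h2 yk in simp)
  have "k (y v) = q *s (inverse q *s k (y v))" using q0 by simp
  also have "\<dots> = (q * (q * l)) *s y v - (q * (q - inverse q)) *s v"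
    unfolding h3 by (simp add: scale_right_diff_distrib)
  also have "q * (q - inverse q) = q * q - 1" using q0 by (simp add: right_diff_distrib)
  finally have h4: "k (y v) = (q * (q * l)) *s y v - (q * q - 1) *s v" .
  have "k (y v - inverse l *s v) = k (y v) - inverse l *s (l *s v)"
    by (simp add: lin_diff[OF k] lin_scale[OF k] kv)
  also have "\<dots> = (q * (q * l)) *s y v - (q * q - 1) *s v - v" using l0 by (simp add: h4)
  also have "\<dots> = (q * (q * l)) *s y v - (q * q) *s v" by (simp add: scale_left_diff_distrib)
  also have "\<dots> = (l * q^2) *s y v - (l * q^2 * inverse l) *s v" using l0
    by (simp add: power2_eq_square mult.commute mult.left_commute)
  also have "\<dots> = (l * q^2) *s (y v - inverse l *s v)" by (simp add: scale_right_diff_distrib)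
  finally show ?thesis .
qed

lemma qrel_down:
  assumes qr: "qrel scale q k y id" and y: "lin y" and k: "lin k" and kv: "k v = l *s v" and l0: "l \<noteq> 0"
  shows "k (y v - inverse l *s v) = (l / q^2) *s (y v - inverse l *s v)"
proof -
  have h: "inverse (q - inverse q) *s (q *s k (y v) - inverse q *s y (k v)) = v"
    using qr unfolding qrel_def by simp
  have h2: "q *s k (y v) - inverse q *s y (k v) = (q - inverse q) *s v"
    using arg_cong[OF h, of "\<lambda>x. (q - inverse q) *s x"] qa by simp
  have yk: "y (k v) = l *s y v" by (simp add: kv lin_scale[OF y])
  have h3: "q *s k (y v) = (q - inverse q) *s v + (inverse q * l) *s y v"
    using h2 yk by (simp add: diff_eq_eq)
  have "k (y v) = inverse q *s (q *s k (y v))" using q0 by simp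
  also have "\<dots> = (inverse q * (q - inverse q)) *s v + (inverse q * (inverse q * l)) *s y v"
    unfolding h3 by (simp add: scale_right_distrib)
  also have "inverse q * (q - inverse q) = 1 - inverse q * inverse q" using q0 by (simp add: right_diff_distrib)
  finally have h4: "k (y v) = (1 - inverse q * inverse q) *s v + (inverse q * (inverse q * l)) *s y v" .
  have "k (y v - inverse l *s v) = k (y v) - inverse l *s (l *s v)"
    by (simp add: lin_diff[OF k] lin_scale[OF k] kv)
  also have "\<dots> = (1 - inverse q * inverse q) *s v + (inverse q * (inverse q * l)) *s y v - v" using l0 by (simp add: h4)
  also have "\<dots> = (inverse q * (inverse q * l)) *s y v - (inverse q * inverse q) *s v" by (simp add: scale_left_diff_distrib)
  also have "\<dots> = (l / q^2) *s y v - (l / q^2 * inverse l) *s v" using l0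
    by (simp add: power2_eq_square field_simps)
  also have "\<dots> = (l / q^2) *s (y v - inverse l *s v)" by (simp add: scale_right_diff_distrib)
  finally show ?thesis .
qed


definition E :: "'k \<Rightarrow> 'v set" where "E l = {v. k0 v = l *s v}"
definition ev :: "'k \<Rightarrow> bool" where "ev l \<longleftrightarrow> (\<exists>w. w \<noteq> 0 \<and> k0 w = l *s w)"

lemma E_sub: "subspace (E l)"
  unfolding E_def by (rule subspaceI) (auto simp: lin_0 lin_add lin_scale lins scale_right_distrib scale_left_commute)

lemma k0_0: "k0 v = 0 \<Longrightarrow> v = 0"
  using kinv(2)[of v] lin_0[OF lins(7)] by simp

lemma ev_nz: "ev l \<Longrightarrow> l \<noteq> 0"
  unfolding ev_def using k0_0 by force

lemma nonev: "x \<in> E l \<Longrightarrow> \<not> ev l \<Longrightarrow> x = 0"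
  unfolding E_def ev_def by auto

lemma central: "\<exists>c. c \<noteq> 0 \<and> (\<forall>v. k0 (k1 v) = c *s v)"
proof -
  have L: "lin (k0 \<circ> k1)" using Vector_Spaces.linear_compose[OF lins(6) lins(5)] .
  obtain r w where rw: "w \<noteq> 0" "(k0 \<circ> k1) w = r *s w" using eig_exists[OF acf L nz] by blast
  define W where "W = {v. k0 (k1 v) = r *s v}"
  have sW: "subspace W"
    unfolding W_def by (rule subspaceI) (auto simp: lin_0 lin_add lin_scale lins scale_right_distrib scale_left_commute)
  have inv: "\<forall>g\<in>{yp0, yp1, ym0, ym1, k0, k1, k0i, k1i}. g ` W \<subseteq> W"
  proof (intro ballI subsetI)
    fix g x assume g: "g \<in> {yp0, yp1, ym0, ym1, k0, k1, k0i, k1i}" and x: "x \<in> g ` W"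
    then obtain v where v: "v \<in> W" "x = g v" by auto
    have lg: "lin g" using g lins by auto
    have "k0 (k1 (g v)) = g (k0 (k1 v))" by (rule cent[OF g])
    also have "\<dots> = r *s g v" using v(1) lin_scale[OF lg] unfolding W_def by simp
    finally show "x \<in> W" using v unfolding W_def by simp
  qed
  have "W \<noteq> {0}" using rw unfolding W_def by auto
  then have WU: "W = UNIV" using irr[OF sW inv] by blast
  have "r \<noteq> 0"
  proof
    assume "r = 0"
    then have "k0 (k1 w) = 0" using rw by simp
    then have "k1 w = 0" by (rule k0_0)
    then have "w = 0" using kinv(4)[of w] lin_0[OF lins(8)] by simp
    then show False using rw by simp
  qed
  then show ?thesis using WU unfolding W_def by auto
qed

definition cc :: 'k where "cc = (SOME c. c \<noteq> 0 \<and> (\<forall>v. k0 (k1 v) = c *s v))"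

lemma cc: "cc \<noteq> 0" "k0 (k1 v) = cc *s v"
  using someI_ex[OF central] unfolding cc_def[symmetric] by auto

lemma k1k0: "k1 (k0 v) = cc *s v"
proof -
  have "k0 (k1 (k0 v)) = k0 (cc *s v)" using cc(2)[of "k0 v"] by (simp add: lin_scale lins)
  then have "k0i (k0 (k1 (k0 v))) = k0i (k0 (cc *s v))" by simp
  then show ?thesis by (simp add: kinv)
qed

lemma k1E: "v \<in> E l \<Longrightarrow> l \<noteq> 0 \<Longrightarrow> k1 v = (cc / l) *s v"
proof -
  assume v: "v \<in> E l" and l: "l \<noteq> 0"
  have "l *s k1 v = cc *s v" using k1k0[of v] v lin_scale[OF lins(6)] unfolding E_def by simp
  then have "inverse l *s (l *s k1 v) = inverse l *s (cc *s v)" by simp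
  then show ?thesis using l by (simp add: field_simps)
qed

lemma EF: "l \<noteq> 0 \<Longrightarrow> k1 v = (cc / l) *s v \<Longrightarrow> v \<in> E l"
proof -
  assume l: "l \<noteq> 0" and k: "k1 v = (cc / l) *s v"
  have "cc *s v = (cc / l) *s k0 v" using cc(2)[of v] k lin_scale[OF lins(5)] by simp
  then have "(l / cc) *s (cc *s v) = (l / cc) *s ((cc / l) *s k0 v)" by simp
  then have "l *s v = k0 v" using l cc(1) by simp
  then show ?thesis unfolding E_def by simp
qed

lemma k0iE: "v \<in> E l \<Longrightarrow> l \<noteq> 0 \<Longrightarrow> k0i v = inverse l *s v"
proof -
  assume v: "v \<in> E l" and l: "l \<noteq> 0"
  have "v = l *s k0i v" using kinv(2)[of v] v lin_scale[OF lins(7)] unfolding E_def by simp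
  then have "inverse l *s v = inverse l *s (l *s k0i v)" by simp
  then show ?thesis using l by simp
qed

lemma k1iE: "v \<in> E l \<Longrightarrow> l \<noteq> 0 \<Longrightarrow> k1i v = (l / cc) *s v"
proof -
  assume v: "v \<in> E l" and l: "l \<noteq> 0"
  have "v = (cc / l) *s k1i v" using kinv(4)[of v] k1E[OF v l] lin_scale[OF lins(8)] by simp
  then have "(l / cc) *s v = (l / cc) *s ((cc / l) *s k1i v)" by simp
  then show ?thesis using l cc(1) by simp
qed

lemma sh_yp0: "v \<in> E l \<Longrightarrow> l \<noteq> 0 \<Longrightarrow> yp0 v - inverse l *s v \<in> E (l * q^2)"
  using qrel_up[OF qrels(1) lins(1) lins(5)] unfolding E_def by auto

lemma sh_ym0: "v \<in> E l \<Longrightarrow> l \<noteq> 0 \<Longrightarrow> ym0 v - inverse l *s v \<in> E (l / q^2)"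
  using qrel_down[OF qrels(3) lins(3) lins(5)] unfolding E_def by auto

lemma sh_yp1: "v \<in> E l \<Longrightarrow> l \<noteq> 0 \<Longrightarrow> yp1 v - (l / cc) *s v \<in> E (l / q^2)"
proof -
  assume v: "v \<in> E l" and l: "l \<noteq> 0"
  have m: "cc / l \<noteq> 0" using l cc(1) by simp
  have "k1 (yp1 v - inverse (cc / l) *s v) = (cc / l * q^2) *s (yp1 v - inverse (cc / l) *s v)"
    using qrel_up[OF qrels(2) lins(2) lins(6) k1E[OF v l] m] .
  moreover have "cc / l * q^2 = cc / (l / q^2)" using q0 by simp
  moreover have "l / q^2 \<noteq> 0" using l q0 by simp
  ultimately show ?thesis using EF by simp
qed

lemma sh_ym1: "v \<in> E l \<Longrightarrow> l \<noteq> 0 \<Longrightarrow> ym1 v - (l / cc) *s v \<in> E (l * q^2)"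
proof -
  assume v: "v \<in> E l" and l: "l \<noteq> 0"
  have m: "cc / l \<noteq> 0" using l cc(1) by simp
  have "k1 (ym1 v - inverse (cc / l) *s v) = (cc / l / q^2) *s (ym1 v - inverse (cc / l) *s v)"
    using qrel_down[OF qrels(4) lins(4) lins(6) k1E[OF v l] m] .
  moreover have "cc / l / q^2 = cc / (l * q^2)" using q0 by simp
  moreover have "l * q^2 \<noteq> 0" using l q0 by simp
  ultimately show ?thesis using EF by simp
qed

lemma ev_string: "l \<noteq> 0 \<Longrightarrow> s \<noteq> 0 \<Longrightarrow> \<not> (\<forall>i\<le>card B. ev (l * q powi (s * int i)))"
proof
  assume l: "l \<noteq> 0" and s: "s \<noteq> 0" and all: "\<forall>i\<le>card B. ev (l * q powi (s * int i))"
  have inj: "inj_on (\<lambda>i. l * q powi (s * int i)) {..card B}"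
    unfolding inj_on_def using l s by (auto dest!: powi_inj)
  show False
    by (rule no_long_string[OF lins(5) inj]) (use all in \<open>auto simp: ev_def\<close>)
qed

lemma lamf_eq: "lamf q (l0 * q^d) d i = l0 * q powi (2 * int i)"
proof -
  have "q ^ d * q powi (2 * int i - int d) = q powi (int d) * q powi (2 * int i - int d)" by simp
  also have "\<dots> = q powi (int d + (2 * int i - int d))" by (rule powi_add)
  also have "\<dots> = q powi (2 * int i)" by simp
  finally show ?thesis unfolding lamf_def by (simp add: mult.assoc)
qed

lemma construct: "\<exists>e0 d. e0 \<noteq> 0 \<and> (\<forall>i\<le>d. ev (lamf q e0 d i)) \<and> \<not> ev (lamf q e0 d 0 / q^2) \<and> \<not> ev (lamf q e0 d d * q^2)"
proof -
  obtain l w where lw: "w \<noteq> 0" "k0 w = l *s w" using eig_exists[OF acf lins(5) nz] by blast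
  have evl: "ev l" using lw unfolding ev_def by blast
  have l0: "l \<noteq> 0" using ev_nz[OF evl] .
  have ex1: "\<exists>n. \<not> ev (l * q powi (-2 * int (Suc n)))"
  proof -
    obtain i where i: "i \<le> card B" "\<not> ev (l * q powi (-2 * int i))" using ev_string[OF l0, of "-2"] by auto
    have "i \<noteq> 0"
    proof
      assume "i = 0" then show False using i evl by simp
    qed
    then obtain n where "i = Suc n" using not0_implies_Suc by blast
    then show ?thesis using i by blast
  qed
  define m where "m = (LEAST n. \<not> ev (l * q powi (-2 * int (Suc n))))"
  define la where "la = l * q powi (-2 * int m)"
  have evla: "ev la"
  proof (cases m)
    case 0 then show ?thesis using evl unfolding la_def by simp
  next
    case (Suc m')
    then have "m' < m" by simp
    then have "\<not> \<not> ev (l * q powi (-2 * int (Suc m')))" unfolding m_def by (rule not_less_Least)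
    then show ?thesis unfolding la_def Suc by simp
  qed
  have "\<not> ev (l * q powi (-2 * int (Suc m)))" unfolding m_def by (rule LeastI_ex[OF ex1])
  moreover have "l * q powi (-2 * int (Suc m)) = la / q^2"
  proof -
    have "q powi (-2 * int m) * q powi (-2) = q powi (-2 * int (Suc m))" by (simp add: powi_add algebra_simps)
    moreover have "q powi (-2) = inverse (q^2)" by (simp add: power_int_minus)
    ultimately have "q powi (-2 * int (Suc m)) = q powi (-2 * int m) / q^2" by (simp add: divide_inverse)
    then show ?thesis unfolding la_def by simp
  qed
  ultimately have nla: "\<not> ev (la / q^2)" by simp
  have la0: "la \<noteq> 0" using ev_nz[OF evla] .
  have ex2: "\<exists>n. \<not> ev (la * q powi (2 * int (Suc n)))"
  proof -
    obtain i where i: "i \<le> card B" "\<not> ev (la * q powi (2 * int i))" using ev_string[OF la0, of "2"] by auto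
    have "i \<noteq> 0"
    proof
      assume "i = 0" then show False using i evla by simp
    qed
    then obtain n where "i = Suc n" using not0_implies_Suc by blast
    then show ?thesis using i by blast
  qed
  define d where "d = (LEAST n. \<not> ev (la * q powi (2 * int (Suc n))))"
  have evi: "ev (la * q powi (2 * int i))" if "i \<le> d" for i
  proof (cases i)
    case 0 then show ?thesis using evla by simp
  next
    case (Suc j)
    then have "j < d" using that by simp
    then have "\<not> \<not> ev (la * q powi (2 * int (Suc j)))" unfolding d_def by (rule not_less_Least)
    then show ?thesis unfolding Suc by simp
  qed
  have "\<not> ev (la * q powi (2 * int (Suc d)))" unfolding d_def by (rule LeastI_ex[OF ex2])
  moreover have "la * q powi (2 * int (Suc d)) = la * q powi (2 * int d) * q^2"
  proof -
    have "q powi (2 * int d) * q powi 2 = q powi (2 * int d + 2)" by (rule powi_add)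
    also have "2 * int d + 2 = 2 * int (Suc d)" by simp
    finally have "q powi (2 * int d) * q^2 = q powi (2 * int (Suc d))" by simp
    then show ?thesis by (simp add: mult.assoc)
  qed
  ultimately have nd: "\<not> ev (la * q powi (2 * int d) * q^2)" by metis
  show ?thesis
    apply (rule exI[of _ "la * q^d"], rule exI[of _ d])
    using la0 q0 evi nla nd by (simp add: lamf_eq)
qed

lemma E_k0: "v \<in> E l \<Longrightarrow> k0 v = l *s v" unfolding E_def by simp

lemma ev_E: "ev l \<Longrightarrow> E l \<noteq> {0}" unfolding ev_def E_def by auto

lemma lam_bottom: "e0 \<noteq> 0 \<Longrightarrow> lamf q e0 d 0 / q^2 \<noteq> lamf q e0 d j"
proof
  assume e0: "e0 \<noteq> 0" and eq: "lamf q e0 d 0 / q^2 = lamf q e0 d j"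
  then have "lamf q e0 d 0 = lamf q e0 d j * q^2" using q0 by (simp add: field_simps)
  also have "\<dots> = lamf q e0 d (Suc j)" by (rule lamf_up)
  finally show False using lamf_inj[OF e0, of d UNIV] unfolding inj_on_def by blast
qed

lemma powi_inv_eq: "inverse (q powi (2 * int i - int d)) = q powi (int d - 2 * int i)"
proof -
  have "q powi (int d - 2 * int i) = q powi (- (2 * int i - int d))" by simp
  also have "\<dots> = inverse (q powi (2 * int i - int d))" by (rule power_int_minus)
  finally show ?thesis by simp
qed

lemma existence_wd:
  assumes e0: "e0 \<noteq> 0" and evs: "\<forall>i\<le>d. ev (lamf q e0 d i)"
    and bot: "\<not> ev (lamf q e0 d 0 / q^2)" and top: "\<not> ev (lamf q e0 d d * q^2)"
  shows "weight_decomp scale q k0 k1 e0 (cc / e0) d (\<lambda>i. E (lamf q e0 d i))"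
proof -
  let ?lam = "lamf q e0 d"
  define W where "W = {v. \<exists>u. (\<forall>i\<le>d. u i \<in> E (?lam i)) \<and> v = (\<Sum>i\<le>d. u i)}"
  have single: "x \<in> W" if "x \<in> E (?lam j)" "j \<le> d" for x j
  proof -
    define u where "u i = (if i = j then x else 0)" for i
    have "\<forall>i\<le>d. u i \<in> E (?lam i)" using that by (auto simp: u_def subspace_0[OF E_sub])
    moreover have "x = (\<Sum>i\<le>d. u i)" using that by (simp add: u_def)
    ultimately show ?thesis unfolding W_def by blast
  qed
  have W0: "0 \<in> W" using single[of 0 0] subspace_0[OF E_sub] by simp
  have up: "x \<in> W" if "x \<in> E (?lam i * q^2)" "i \<le> d" for x i
  proof (cases "i = d")
    case True
    then have "x = 0" using nonev[OF _ top] that by simp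
    then show ?thesis using W0 by simp
  next
    case False
    then show ?thesis using that single[of x "Suc i"] by (simp add: lamf_up)
  qed
  have down: "x \<in> W" if "x \<in> E (?lam i / q^2)" "i \<le> d" for x i
  proof (cases i)
    case 0
    then have "x = 0" using nonev[OF _ bot] that by simp
    then show ?thesis using W0 by simp
  next
    case (Suc j)
    then show ?thesis using that single[of x j] by (simp add: lamf_down)
  qed
  have sW: "subspace W"
  proof (rule subspaceI)
    show "0 \<in> W" by (rule W0)
  next
    fix x y assume "x \<in> W" "y \<in> W"
    then obtain u u' where "\<forall>i\<le>d. u i \<in> E (?lam i)" "x = (\<Sum>i\<le>d. u i)"
      "\<forall>i\<le>d. u' i \<in> E (?lam i)" "y = (\<Sum>i\<le>d. u' i)" unfolding W_def by blast
    then show "x + y \<in> W" unfolding W_def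
      by (intro CollectI exI[of _ "\<lambda>i. u i + u' i"]) (simp add: sum.distrib subspace_add[OF E_sub])
  next
    fix c x assume "x \<in> W"
    then obtain u where "\<forall>i\<le>d. u i \<in> E (?lam i)" "x = (\<Sum>i\<le>d. u i)" unfolding W_def by blast
    then show "c *s x \<in> W" unfolding W_def
      by (intro CollectI exI[of _ "\<lambda>i. c *s u i"]) (simp add: scale_sum_right subspace_scale[OF E_sub])
  qed
  have gen: "g v \<in> W" if g: "g \<in> {yp0, yp1, ym0, ym1, k0, k1, k0i, k1i}" and v: "v \<in> E (?lam i)" and i: "i \<le> d" for g v i
  proof -
    let ?l = "?lam i"
    have l0: "?l \<noteq> 0" using lamf_nz[OF e0] .
    have vW: "c *s v \<in> W" for c using single[OF v i] subspace_scale[OF sW] by blast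
    consider "g = yp0" | "g = yp1" | "g = ym0" | "g = ym1" | "g = k0" | "g = k1" | "g = k0i" | "g = k1i" using g by blast
    then show ?thesis
    proof cases
      case 1
      have "yp0 v = (yp0 v - inverse ?l *s v) + inverse ?l *s v" by simp
      moreover have "yp0 v - inverse ?l *s v \<in> W" by (rule up[OF sh_yp0[OF v l0] i])
      ultimately show ?thesis using 1 vW subspace_add[OF sW] by metis
    next
      case 2
      have "yp1 v = (yp1 v - (?l / cc) *s v) + (?l / cc) *s v" by simp
      moreover have "yp1 v - (?l / cc) *s v \<in> W" by (rule down[OF sh_yp1[OF v l0] i])
      ultimately show ?thesis using 2 vW subspace_add[OF sW] by metis
    next
      case 3
      have "ym0 v = (ym0 v - inverse ?l *s v) + inverse ?l *s v" by simp
      moreover have "ym0 v - inverse ?l *s v \<in> W" by (rule down[OF sh_ym0[OF v l0] i])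
      ultimately show ?thesis using 3 vW subspace_add[OF sW] by metis
    next
      case 4
      have "ym1 v = (ym1 v - (?l / cc) *s v) + (?l / cc) *s v" by simp
      moreover have "ym1 v - (?l / cc) *s v \<in> W" by (rule up[OF sh_ym1[OF v l0] i])
      ultimately show ?thesis using 4 vW subspace_add[OF sW] by metis
    next
      case 5 then show ?thesis using vW E_k0[OF v] by simp
    next
      case 6 then show ?thesis using vW k1E[OF v l0] by simp
    next
      case 7 then show ?thesis using vW k0iE[OF v l0] by simp
    next
      case 8 then show ?thesis using vW k1iE[OF v l0] by simp
    qed
  qed
  have inv: "\<forall>g\<in>{yp0, yp1, ym0, ym1, k0, k1, k0i, k1i}. g ` W \<subseteq> W"
  proof (intro ballI subsetI)
    fix g x assume g: "g \<in> {yp0, yp1, ym0, ym1, k0, k1, k0i, k1i}" and x: "x \<in> g ` W"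
    then obtain v where v: "v \<in> W" "x = g v" by auto
    then obtain u where u: "\<forall>i\<le>d. u i \<in> E (?lam i)" "v = (\<Sum>i\<le>d. u i)" unfolding W_def by blast
    have lg: "lin g" using g lins by auto
    have "g v = (\<Sum>i\<le>d. g (u i))" using u(2) lin_sum[OF lg] by simp
    also have "\<dots> \<in> W"
    proof (rule subspace_sum[OF sW])
      fix i assume "i \<in> {..d}"
      then show "g (u i) \<in> W" using gen[OF g, of "u i" i] u(1) by simp
    qed
    finally show "x \<in> W" using v by simp
  qed
  have "E (?lam 0) \<noteq> {0}" using ev_E evs by simp
  then obtain w where w: "w \<in> E (?lam 0)" "w \<noteq> 0" using subspace_0[OF E_sub] by blast
  have "W \<noteq> {0}" using single[OF w(1)] w(2) by auto
  then have WU: "W = UNIV" using irr[OF sW inv] by blast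
  have dec: "decomposition scale d (\<lambda>i. E (?lam i))"
    unfolding decomposition_def
  proof (intro conjI allI impI)
    fix i assume "i \<le> d"
    then show "subspace (E (?lam i))" "E (?lam i) \<noteq> {0}" using E_sub ev_E evs by auto
  next
    fix v
    obtain u where u: "\<forall>i\<le>d. u i \<in> E (?lam i)" "v = (\<Sum>i\<le>d. u i)" using WU unfolding W_def by blast
    define u' where "u' i = (if i \<le> d then u i else 0)" for i
    have ex: "(\<forall>i\<le>d. u' i \<in> E (?lam i)) \<and> (\<forall>i>d. u' i = 0) \<and> v = (\<Sum>i\<le>d. u' i)"
      using u by (simp add: u'_def)
    show "\<exists>!u. (\<forall>i\<le>d. u i \<in> E (?lam i)) \<and> (\<forall>i>d. u i = 0) \<and> v = (\<Sum>i\<le>d. u i)"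
    proof (rule ex1I[of _ u'])
      show "(\<forall>i\<le>d. u' i \<in> E (?lam i)) \<and> (\<forall>i>d. u' i = 0) \<and> v = (\<Sum>i\<le>d. u' i)" by (rule ex)
    next
      fix y assume y: "(\<forall>i\<le>d. y i \<in> E (?lam i)) \<and> (\<forall>i>d. y i = 0) \<and> v = (\<Sum>i\<le>d. y i)"
      have "\<forall>i\<in>{..d}. y i - u' i = 0"
      proof (rule eig_indep[OF lins(5) _ lamf_inj[OF e0]])
        show "\<forall>i\<in>{..d}. k0 (y i - u' i) = ?lam i *s (y i - u' i)"
          using y ex by (auto intro!: E_k0 subspace_diff[OF E_sub])
        show "(\<Sum>i\<in>{..d}. y i - u' i) = 0" using y ex by (simp add: sum_subtractf)
      qed simp
      then show "y = u'" using y ex by (metis atMost_iff eq_iff_diff_eq_0 ext not_le)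
    qed
  qed
  show ?thesis unfolding weight_decomp_def
  proof (intro conjI ballI allI impI)
    show "e0 \<noteq> 0" "cc / e0 \<noteq> 0" using e0 cc(1) by auto
    show "decomposition scale d (\<lambda>i. E (?lam i))" by (rule dec)
  next
    fix i u assume i: "i \<le> d" and u: "u \<in> E (?lam i)"
    show "k0 u = (e0 * q powi (2 * int i - int d)) *s u" using E_k0[OF u] by (simp add: lamf_def)
    have "k1 u = (cc / ?lam i) *s u" by (rule k1E[OF u lamf_nz[OF e0]])
    also have "cc / ?lam i = cc / e0 * q powi (int d - 2 * int i)"
      unfolding lamf_def powi_inv_eq[symmetric] by (simp add: field_simps)
    finally show "k1 u = (cc / e0 * q powi (int d - 2 * int i)) *s u" .
  qed
qed

lemma wd_char:
  assumes wd: "weight_decomp scale q k0 k1 e0 e1 d U"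
  shows "\<forall>i\<le>d. U i = E (lamf q e0 d i)" and "ev l \<longleftrightarrow> (\<exists>i\<le>d. l = lamf q e0 d i)"
proof -
  let ?lam = "lamf q e0 d"
  have e0: "e0 \<noteq> 0" using wd unfolding weight_decomp_def by simp
  have dec: "decomposition scale d U" using wd unfolding weight_decomp_def by simp
  have sub: "\<forall>i\<le>d. subspace (U i) \<and> U i \<noteq> {0}" using dec unfolding decomposition_def by simp
  have UE: "U i \<subseteq> E (?lam i)" if "i \<le> d" for i
    using wd that unfolding weight_decomp_def E_def lamf_def by auto
  have rep: "\<exists>u. (\<forall>i\<le>d. u i \<in> U i) \<and> v = (\<Sum>i\<le>d. u i)" for v
    using dec unfolding decomposition_def by blast
  show "\<forall>i\<le>d. U i = E (?lam i)"
  proof (intro allI impI equalityI)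
    fix i assume i: "i \<le> d"
    show "U i \<subseteq> E (?lam i)" by (rule UE[OF i])
    show "E (?lam i) \<subseteq> U i"
    proof
      fix v assume v: "v \<in> E (?lam i)"
      obtain u where u: "\<forall>j\<le>d. u j \<in> U j" "v = (\<Sum>j\<le>d. u j)" using rep by blast
      define z where "z j = u j - (if j = i then v else 0)" for j
      have "\<forall>j\<in>{..d}. z j = 0"
      proof (rule eig_indep[OF lins(5) _ lamf_inj[OF e0]])
        show "\<forall>j\<in>{..d}. k0 (z j) = ?lam j *s z j"
        proof
          fix j assume j: "j \<in> {..d}"
          have "u j \<in> E (?lam j)" using u(1) UE j by auto
          moreover have "(if j = i then v else 0) \<in> E (?lam j)" using v subspace_0[OF E_sub] by auto
          ultimately have "z j \<in> E (?lam j)" unfolding z_def by (rule subspace_diff[OF E_sub])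
          then show "k0 (z j) = ?lam j *s z j" by (rule E_k0)
        qed
        show "(\<Sum>j\<in>{..d}. z j) = 0" using i u(2) by (simp add: z_def sum_subtractf)
      qed simp
      then have "z i = 0" using i by simp
      then have "v = u i" by (simp add: z_def)
      then show "v \<in> U i" using u(1) i by simp
    qed
  qed
  show "ev l \<longleftrightarrow> (\<exists>i\<le>d. l = ?lam i)"
  proof
    assume "ev l"
    then obtain w where w: "w \<noteq> 0" "k0 w = l *s w" unfolding ev_def by blast
    obtain u where u: "\<forall>j\<le>d. u j \<in> U j" "w = (\<Sum>j\<le>d. u j)" using rep by blast
    have uE: "k0 (u j) = ?lam j *s u j" if "j \<le> d" for j using u(1) UE that E_k0 by blast
    define z where "z j = (?lam j - l) *s u j" for j
    have "\<forall>j\<in>{..d}. z j = 0"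
    proof (rule eig_indep[OF lins(5) _ lamf_inj[OF e0]])
      show "\<forall>j\<in>{..d}. k0 (z j) = ?lam j *s z j"
        using uE by (simp add: z_def lin_scale[OF lins(5)] scale_left_commute)
      have "(\<Sum>j\<in>{..d}. z j) = (\<Sum>j\<le>d. k0 (u j)) - l *s (\<Sum>j\<le>d. u j)"
        using uE by (simp add: z_def scale_left_diff_distrib sum_subtractf scale_sum_right)
      also have "\<dots> = 0" using u(2) w(2) by (simp add: lin_sum[OF lins(5), symmetric])
      finally show "(\<Sum>j\<in>{..d}. z j) = 0" .
    qed simp
    show "\<exists>i\<le>d. l = ?lam i"
    proof (rule ccontr)
      assume "\<not> (\<exists>i\<le>d. l = ?lam i)"
      then have "\<forall>j\<le>d. u j = 0" using \<open>\<forall>j\<in>{..d}. z j = 0\<close> by (auto simp: z_def)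
      then have "w = 0" using u(2) by simp
      then show False using w(1) by simp
    qed
  next
    assume "\<exists>i\<le>d. l = ?lam i"
    then obtain i where i: "i \<le> d" "l = ?lam i" by blast
    obtain x where "x \<in> U i" "x \<noteq> 0" using sub i subspace_0 by blast
    then show "ev l" using UE[OF i(1)] i(2) unfolding ev_def E_def by blast
  qed
qed

lemma wd_parts:
  assumes "weight_decomp scale q k0 k1 e0 e1 d U"
  shows "e0 \<noteq> 0" "e1 \<noteq> 0" "decomposition scale d U"
    "\<And>i u. i \<le> d \<Longrightarrow> u \<in> U i \<Longrightarrow> k1 u = (e1 * q powi (int d - 2 * int i)) *s u"
    "\<And>i. i \<le> d \<Longrightarrow> subspace (U i)" "\<And>i. i \<le> d \<Longrightarrow> U i \<noteq> {0}"
  using assms unfolding weight_decomp_def decomposition_def by simp_all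

lemma bottom_eq:
  assumes S: "\<And>l. (\<exists>i\<le>d. l = lamf q e0 d i) \<longleftrightarrow> (\<exists>i\<le>d'. l = lamf q e0' d' i)"
    and e0: "e0 \<noteq> 0"
  shows "lamf q e0 d 0 = lamf q e0' d' 0"
proof -
  let ?lam = "lamf q e0 d" and ?lam' = "lamf q e0' d'"
  have "\<exists>i\<le>d. ?lam 0 = ?lam i" by blast
  then obtain j where j: "j \<le> d'" "?lam 0 = ?lam' j" using S[of "?lam 0"] by blast
  show ?thesis
  proof (cases j)
    case 0 then show ?thesis using j by simp
  next
    case (Suc j')
    have "?lam' j' = ?lam' j / q^2" using lamf_down[of e0' d' j'] Suc by simp
    then have eq: "?lam' j' = ?lam 0 / q^2" using j by simp
    have "\<exists>i\<le>d'. ?lam' j' = ?lam' i" using j Suc by (intro exI[of _ j']) simp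
    then obtain i where "i \<le> d" "?lam' j' = ?lam i" using S[of "?lam' j'"] by blast
    then show ?thesis using lam_bottom[OF e0, of d i] eq by simp
  qed
qed

lemma wd_unique:
  assumes wd: "weight_decomp scale q k0 k1 e0 e1 d U" and wd': "weight_decomp scale q k0 k1 e0' e1' d' U'"
  shows "e0' = e0 \<and> e1' = e1 \<and> d' = d \<and> (\<forall>i\<le>d. U' i = U i)"
proof -
  let ?lam = "lamf q e0 d" and ?lam' = "lamf q e0' d'"
  have e0: "e0 \<noteq> 0" and e0': "e0' \<noteq> 0" using wd_parts(1)[OF wd] wd_parts(1)[OF wd'] .
  have S: "(\<exists>i\<le>d. l = ?lam i) \<longleftrightarrow> (\<exists>i\<le>d'. l = ?lam' i)" for l
    using wd_char(2)[OF wd, of l] wd_char(2)[OF wd', of l] by simp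
  have b: "?lam 0 = ?lam' 0" by (rule bottom_eq[OF S e0])
  have img: "?lam ` {..d} = ?lam' ` {..d'}"
  proof (rule set_eqI)
    fix l show "l \<in> ?lam ` {..d} \<longleftrightarrow> l \<in> ?lam' ` {..d'}" using S[of l] unfolding image_iff atMost_iff Bex_def by blast
  qed
  have "card (?lam ` {..d}) = Suc d" using lamf_inj[OF e0] by (simp add: card_image)
  moreover have "card (?lam' ` {..d'}) = Suc d'" using lamf_inj[OF e0'] by (simp add: card_image)
  ultimately have dd: "d' = d" using img by simp
  have "e0 * q powi (- int d) = e0' * q powi (- int d)" using b dd by (simp add: lamf_def)
  then have ee: "e0' = e0" using q0 by simp
  have UU: "\<forall>i\<le>d. U' i = U i"
  proof (intro allI impI)
    fix i assume i: "i \<le> d"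
    have "U' i = E (?lam' i)" using wd_char(1)[OF wd'] i dd by simp
    also have "\<dots> = E (?lam i)" using dd ee by simp
    also have "\<dots> = U i" using wd_char(1)[OF wd] i by simp
    finally show "U' i = U i" .
  qed
  have "U 0 \<noteq> {0}" "subspace (U 0)" using wd_parts(5,6)[OF wd, of 0] by auto
  then obtain x where x: "x \<in> U 0" "x \<noteq> 0" using subspace_0 by blast
  have x': "x \<in> U' 0" using x(1) UU by simp
  have "k1 x = (e1 * q powi (int d - 2 * int 0)) *s x" by (rule wd_parts(4)[OF wd _ x(1)]) simp
  moreover have "k1 x = (e1' * q powi (int d' - 2 * int 0)) *s x" by (rule wd_parts(4)[OF wd' _ x']) simp
  ultimately have "(e1' * q powi (int d)) *s x = (e1 * q powi (int d)) *s x" using dd by simp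
  then have "e1' * q powi (int d) = e1 * q powi (int d)" using x(2) by simp
  then have "e1' = e1" using q0 by simp
  then show ?thesis using dd ee UU by simp
qed

lemma up_mem:
  assumes e0: "e0 \<noteq> 0" and top: "\<not> ev (lamf q e0 d d * q^2)" and X: "X \<in> E (lamf q e0 d i * q^2)"
  shows "c *s X \<in> (if i = d then {0} else E (lamf q e0 d (i + 1)))"
proof (cases "i = d")
  case True
  then show ?thesis using nonev[OF _ top] X by simp
next
  case False
  then show ?thesis using X subspace_scale[OF E_sub] by (simp add: lamf_up)
qed

lemma down_mem:
  assumes e0: "e0 \<noteq> 0" and bot: "\<not> ev (lamf q e0 d 0 / q^2)" and X: "X \<in> E (lamf q e0 d i / q^2)"
  shows "c *s X \<in> (if i = 0 then {0} else E (lamf q e0 d (i - 1)))"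
proof (cases i)
  case 0
  then show ?thesis using nonev[OF _ bot] X by simp
next
  case (Suc j)
  then show ?thesis using X subspace_scale[OF E_sub] by (simp add: lamf_down)
qed

lemma main:
  "\<exists>e0 e1 d U.
    weight_decomp scale q k0 k1 e0 e1 d U \<and>
    (\<forall>e0' e1' d' U'. weight_decomp scale q k0 k1 e0' e1' d' U' \<longrightarrow>
        e0' = e0 \<and> e1' = e1 \<and> d' = d \<and> (\<forall>i\<le>d. U' i = U i)) \<and>
    (\<forall>i\<le>d. \<forall>u\<in>U i.
        scale e0 (yp0 u) - scale (q powi (int d - 2 * int i)) u \<in> (if i = d then {0} else U (i + 1)) \<and>
        scale e1 (ym1 u) - scale (q powi (2 * int i - int d)) u \<in> (if i = d then {0} else U (i + 1)) \<and>
        scale e0 (ym0 u) - scale (q powi (int d - 2 * int i)) u \<in> (if i = 0 then {0} else U (i - 1)) \<and>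
        scale e1 (yp1 u) - scale (q powi (2 * int i - int d)) u \<in> (if i = 0 then {0} else U (i - 1)))"
proof -
  obtain e0 d where e0: "e0 \<noteq> 0" and evs: "\<forall>i\<le>d. ev (lamf q e0 d i)"
    and bot: "\<not> ev (lamf q e0 d 0 / q^2)" and top: "\<not> ev (lamf q e0 d d * q^2)"
    using construct by blast
  let ?lam = "lamf q e0 d"
  have wd: "weight_decomp scale q k0 k1 e0 (cc / e0) d (\<lambda>i. E (?lam i))"
    by (rule existence_wd[OF e0 evs bot top])
  have id1: "e0 * inverse (?lam i) = q powi (int d - 2 * int i)" for i
    using e0 unfolding lamf_def powi_inv_eq[symmetric] by (simp add: field_simps)
  have id2: "cc / e0 * (?lam i / cc) = q powi (2 * int i - int d)" for i
    using e0 cc(1) unfolding lamf_def by (simp add: field_simps)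
  have P2: "\<forall>e0' e1' d' U'. weight_decomp scale q k0 k1 e0' e1' d' U' \<longrightarrow>
        e0' = e0 \<and> e1' = cc / e0 \<and> d' = d \<and> (\<forall>i\<le>d. U' i = E (?lam i))"
    using wd_unique[OF wd] by blast
  have P3: "\<forall>i\<le>d. \<forall>u\<in>E (?lam i).
        e0 *s yp0 u - q powi (int d - 2 * int i) *s u \<in> (if i = d then {0} else E (?lam (i + 1))) \<and>
        (cc / e0) *s ym1 u - q powi (2 * int i - int d) *s u \<in> (if i = d then {0} else E (?lam (i + 1))) \<and>
        e0 *s ym0 u - q powi (int d - 2 * int i) *s u \<in> (if i = 0 then {0} else E (?lam (i - 1))) \<and>
        (cc / e0) *s yp1 u - q powi (2 * int i - int d) *s u \<in> (if i = 0 then {0} else E (?lam (i - 1)))"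
  proof (intro allI impI ballI conjI)
    fix i u assume i: "i \<le> d" and u: "u \<in> E (?lam i)"
    have l0: "?lam i \<noteq> 0" by (rule lamf_nz[OF e0])
    have "e0 *s yp0 u - q powi (int d - 2 * int i) *s u = e0 *s (yp0 u - inverse (?lam i) *s u)"
      by (simp add: scale_right_diff_distrib id1)
    also have "\<dots> \<in> (if i = d then {0} else E (?lam (i + 1)))"
      by (rule up_mem[OF e0 top sh_yp0[OF u l0]])
    finally show "e0 *s yp0 u - q powi (int d - 2 * int i) *s u \<in> (if i = d then {0} else E (?lam (i + 1)))" .
    have "(cc / e0) *s ym1 u - q powi (2 * int i - int d) *s u = (cc / e0) *s (ym1 u - (?lam i / cc) *s u)"
      by (simp only: scale_right_diff_distrib scale_scale id2)
    also have "\<dots> \<in> (if i = d then {0} else E (?lam (i + 1)))"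
      by (rule up_mem[OF e0 top sh_ym1[OF u l0]])
    finally show "(cc / e0) *s ym1 u - q powi (2 * int i - int d) *s u \<in> (if i = d then {0} else E (?lam (i + 1)))" .
    have "e0 *s ym0 u - q powi (int d - 2 * int i) *s u = e0 *s (ym0 u - inverse (?lam i) *s u)"
      by (simp add: scale_right_diff_distrib id1)
    also have "\<dots> \<in> (if i = 0 then {0} else E (?lam (i - 1)))"
      by (rule down_mem[OF e0 bot sh_ym0[OF u l0]])
    finally show "e0 *s ym0 u - q powi (int d - 2 * int i) *s u \<in> (if i = 0 then {0} else E (?lam (i - 1)))" .
    have "(cc / e0) *s yp1 u - q powi (2 * int i - int d) *s u = (cc / e0) *s (yp1 u - (?lam i / cc) *s u)"
      by (simp only: scale_right_diff_distrib scale_scale id2)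
    also have "\<dots> \<in> (if i = 0 then {0} else E (?lam (i - 1)))"
      by (rule down_mem[OF e0 bot sh_yp1[OF u l0]])
    finally show "(cc / e0) *s yp1 u - q powi (2 * int i - int d) *s u \<in> (if i = 0 then {0} else E (?lam (i - 1)))" .
  qed
  show ?thesis
    by (rule exI[of _ e0], rule exI[of _ "cc / e0"], rule exI[of _ d], rule exI[of _ "\<lambda>i. E (?lam i)"],
        rule conjI[OF wd conjI[OF P2 P3]])
qed

end
theorem lemma14p1:
  fixes scale :: "'k::field \<Rightarrow> 'v::ab_group_add \<Rightarrow> 'v"
    and q :: 'k
    and yp0 yp1 ym0 ym1 k0 k1 k0i k1i :: "'v \<Rightarrow> 'v"
  assumes "alg_closed_field TYPE('k)"
    and "q \<noteq> 0" and "\<forall>n::nat. n > 0 \<longrightarrow> q ^ n \<noteq> 1"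
    and "fd_vector_space scale"
    and "U_module scale q yp0 yp1 ym0 ym1 k0 k1 k0i k1i"
    and "U_irreducible scale yp0 yp1 ym0 ym1 k0 k1 k0i k1i"
  shows "\<exists>e0 e1 d U.
    weight_decomp scale q k0 k1 e0 e1 d U \<and>
    (\<forall>e0' e1' d' U'. weight_decomp scale q k0 k1 e0' e1' d' U' \<longrightarrow>
        e0' = e0 \<and> e1' = e1 \<and> d' = d \<and> (\<forall>i\<le>d. U' i = U i)) \<and>
    (\<forall>i\<le>d. \<forall>u\<in>U i.
        scale e0 (yp0 u) - scale (q powi (int d - 2 * int i)) u \<in> (if i = d then {0} else U (i + 1)) \<and>
        scale e1 (ym1 u) - scale (q powi (2 * int i - int d)) u \<in> (if i = d then {0} else U (i + 1)) \<and>
        scale e0 (ym0 u) - scale (q powi (int d - 2 * int i)) u \<in> (if i = 0 then {0} else U (i - 1)) \<and>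
        scale e1 (yp1 u) - scale (q powi (2 * int i - int d)) u \<in> (if i = 0 then {0} else U (i - 1)))"
  proof -
  have vs: "vector_space scale" using assms(4) unfolding fd_vector_space_def by simp
  obtain B where B: "finite B" "module.span scale B = UNIV"
    using assms(4) unfolding fd_vector_space_def by blast
  interpret umod scale B q yp0 yp1 ym0 ym1 k0 k1 k0i k1i
    by (rule umod.intro[OF fdvs.intro[OF vs fdvs_axioms.intro[OF B]] umod_axioms.intro[OF assms(1) assms(2) assms(3) assms(5) assms(6)]])
  show ?thesis by (rule main)
qed

end
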